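(* Let $\kappa$ be any infinite cardinal. Then there is a partition $[\kappa]^{<\omega}=A_0\cup A_1$ into two cells such that for no $i\in 2$ and no uncountable family $X\subseteq[\kappa]^{<\omega}$ of pairwise disjoint finite subsets of $\kappa$ do we have $\mathrm{FU}(X)\subseteq A_i$. Consequently, for every uncountable cardinal $\lambda$ and every cardinal $\kappa\geq\lambda$, the statement $\mathrm{Hind}(\kappa,\lambda)$ fails.
   Context: $[\kappa]^{<\omega}$ denotes the family of all finite subsets of $\kappa$. For a family $X$ of sets, $\mathrm{FU}(X)=\{\bigcup_{Y\in F}Y : F\subseteq X \text{ finite and nonempty}\}$ is the set of finite unions of elements of $X$. For cardinals $\lambda\leq\kappa$, $\mathrm{Hind}(\kappa,\lambda)$ is the statement: for every partition $[\kappa]^{<\omega}=A_0\cup A_1$ into two cells there exist a family $X\subseteq[\kappa]^{<\omega}$ of cardinality $\lambda$ consisting of pairwise disjoint finite subsets of $\kappa$, and an $i\in 2$, such that $\mathrm{FU}(X)\subseteq A_i$. *)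

theory Defs
  imports "HOL-Library.Equipollence" "HOL-Library.Countable_Set"
begin

text \<open>The cardinal kappa is represented by an arbitrary set K (of that cardinality);
  [K]^{<omega} is the family of finite subsets of K.\<close>

definition fin_subsets :: "'a set \<Rightarrow> 'a set set" where
  "fin_subsets K = {F. F \<subseteq> K \<and> finite F}"

definition FU :: "'a set set \<Rightarrow> 'a set set" where
  "FU X = {\<Union>F | F. F \<subseteq> X \<and> finite F \<and> F \<noteq> {}}"

definition Hind :: "'a set \<Rightarrow> 'b set \<Rightarrow> bool" where
  "Hind K L \<longleftrightarrow> (\<forall>A0 A1. A0 \<union> A1 = fin_subsets K \<and> A0 \<inter> A1 = {} \<longrightarrow>
     (\<exists>X. X \<subseteq> fin_subsets K \<and> pairwise disjnt X \<and> X \<approx> L \<and>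
          (FU X \<subseteq> A0 \<or> FU X \<subseteq> A1)))"

end

theory Submission
  imports Defs "HOL-Library.Discrete_Functions"
begin

definition col0 :: "'a set \<Rightarrow> 'a set set" where
  "col0 K = {F \<in> fin_subsets K. even (floor_log (card F))}"

definition col1 :: "'a set \<Rightarrow> 'a set set" where
  "col1 K = {F \<in> fin_subsets K. odd (floor_log (card F))}"

lemma key:
  assumes X: "X \<subseteq> fin_subsets K" "pairwise disjnt X" "uncountable X"
  shows "\<not> (FU X \<subseteq> col0 K \<or> FU X \<subseteq> col1 K)"
proof -
  let ?Y = "X - {{}}"
  have sub: "X \<subseteq> insert {} ?Y" by blast
  have "uncountable ?Y"
  proof
    assume "countable ?Y"
    hence "countable (insert {} ?Y)" by simp
    hence "countable X" using sub by (rule countable_subset[rotated])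
    thus False using X(3) by simp
  qed
  hence "\<not> inj_on card ?Y"
    using countableI[of card ?Y] by auto
  then obtain x y where xy: "x \<in> ?Y" "y \<in> ?Y" "x \<noteq> y" "card x = card y"
    unfolding inj_on_def by auto
  have xX: "x \<in> X" "y \<in> X" "x \<noteq> {}" "y \<noteq> {}" using xy by auto
  have fx: "finite x" "finite y" "x \<subseteq> K" "y \<subseteq> K"
    using xX(1,2) X(1) by (auto simp: fin_subsets_def)
  have ne: "card x \<noteq> 0" using xX(3) fx(1) by simp
  have dj: "x \<inter> y = {}" using X(2) xX(1,2) xy(3) unfolding pairwise_def disjnt_def by blast
  have cu: "card (x \<union> y) = 2 * card x" using card_Un_disjoint[OF fx(1,2) dj] xy(4) by simp
  have "x \<in> FU X" unfolding FU_def
  proof (rule CollectI, rule exI[of _ "{x}"])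
    show "x = \<Union>{x} \<and> {x} \<subseteq> X \<and> finite {x} \<and> {x} \<noteq> {}" using xX by simp
  qed
  moreover have "x \<union> y \<in> FU X" unfolding FU_def
  proof (rule CollectI, rule exI[of _ "{x,y}"])
    show "x \<union> y = \<Union>{x,y} \<and> {x,y} \<subseteq> X \<and> finite {x,y} \<and> {x,y} \<noteq> {}" using xX by simp
  qed
  moreover have fl: "floor_log (card (x \<union> y)) = Suc (floor_log (card x))" using cu ne by simp
  moreover have "x \<union> y \<in> fin_subsets K" using fx by (simp add: fin_subsets_def)
  moreover have "x \<in> fin_subsets K" using fx by (simp add: fin_subsets_def)
  ultimately have a: "x \<in> FU X" "x \<union> y \<in> FU X" "floor_log (card (x \<union> y)) = Suc (floor_log (card x))" by auto
  show ?thesis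
  proof
    assume "FU X \<subseteq> col0 K \<or> FU X \<subseteq> col1 K"
    thus False
    proof
      assume "FU X \<subseteq> col0 K"
      hence "even (floor_log (card x))" "even (floor_log (card (x \<union> y)))"
        using a(1,2) unfolding col0_def by blast+
      thus False using a(3) by simp
    next
      assume "FU X \<subseteq> col1 K"
      hence "odd (floor_log (card x))" "odd (floor_log (card (x \<union> y)))"
        using a(1,2) unfolding col1_def by blast+
      thus False using a(3) by simp
    qed
  qed
qed

theorem theorem2p1:
  fixes K :: "'a set"
  assumes "infinite K"
  shows "(\<exists>A0 A1. A0 \<union> A1 = fin_subsets K \<and> A0 \<inter> A1 = {} \<and>
            \<not> (\<exists>X. X \<subseteq> fin_subsets K \<and> pairwise disjnt X \<and> uncountable X \<and>
                   (FU X \<subseteq> A0 \<or> FU X \<subseteq> A1)))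
         \<and> (\<forall>L :: 'b set. uncountable L \<and> L \<lesssim> K \<longrightarrow> \<not> Hind K L)"
proof -
  have p: "col0 K \<union> col1 K = fin_subsets K" "col0 K \<inter> col1 K = {}"
    unfolding col0_def col1_def by auto
  show ?thesis
  proof (intro conjI allI impI)
    show "\<exists>A0 A1. A0 \<union> A1 = fin_subsets K \<and> A0 \<inter> A1 = {} \<and>
            \<not> (\<exists>X. X \<subseteq> fin_subsets K \<and> pairwise disjnt X \<and> uncountable X \<and>
                   (FU X \<subseteq> A0 \<or> FU X \<subseteq> A1))"
    proof -
      have n: "\<not> (\<exists>X. X \<subseteq> fin_subsets K \<and> pairwise disjnt X \<and> uncountable X \<and>
                   (FU X \<subseteq> col0 K \<or> FU X \<subseteq> col1 K))"
      proof (rule notI, elim exE conjE)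
        fix X assume X: "X \<subseteq> fin_subsets K" "pairwise disjnt X" "uncountable X"
                   "FU X \<subseteq> col0 K \<or> FU X \<subseteq> col1 K"
        show False using key[OF X(1) X(2) X(3)] X(4) by (rule notE)
      qed
      show ?thesis
        apply (rule exI[of _ "col0 K"])
        apply (rule exI[of _ "col1 K"])
        using p n by simp
    qed
  next
    fix L :: "'b set"
    assume L: "uncountable L \<and> L \<lesssim> K"
    show "\<not> Hind K L"
    proof
      assume H: "Hind K L"
      have "\<exists>X. X \<subseteq> fin_subsets K \<and> pairwise disjnt X \<and> X \<approx> L \<and>
          (FU X \<subseteq> col0 K \<or> FU X \<subseteq> col1 K)"
        using mp[OF spec[OF spec[OF H[unfolded Hind_def], of "col0 K"], of "col1 K"] conjI[OF p]] .
      then obtain X where X: "X \<subseteq> fin_subsets K" "pairwise disjnt X" "X \<approx> L"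
          "FU X \<subseteq> col0 K \<or> FU X \<subseteq> col1 K"
        by (elim exE conjE) simp
      have "uncountable X"
      proof
        assume "countable X"
        have "countable L" using countable_eqpoll[OF \<open>countable X\<close> eqpoll_sym[OF X(3)]] .
        thus False using L by simp
      qed
      thus False using key[OF X(1) X(2)] X(4) by simp
    qed
  qed
qed

end
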